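(* Let $\rho_2=(1+2\ln 2)^{-1}\approx0.41906$. Let $\pi$ be drawn uniformly at random among all permutations of $[n]$, independently of $\mathbf v\sim\mathcal F$, and let $p>0$ be such that $\mathbb{E}_{\mathbf v,\pi}\big[\sum_{i\in[n]}y_i(\mathbf v,p,\pi)\big]=\rho_2$. Then \[ \mathbb{E}_{\mathbf v,\pi}[\mathrm{SW}(\mathbf v,p,\pi)]\ \ge\ \rho_2\,\mathbb{E}_{\mathbf v\sim\mathcal F}[\mathrm{SW}^*(\mathbf v)]. \]
   Context: There are $n$ agents, identified with $[n]=\{1,\dots,n\}$, and one perfectly divisible item of size $1$. Each agent $i$ has a valuation function $v_i:[0,1]\to\mathbb{R}_{\ge0}$ that is non-decreasing and concave; $v_i$ is drawn from a publicly known distribution $\mathcal F_i$, independently across agents, and $\mathbf v\sim\mathcal F=\mathcal F_1\times\cdots\times\mathcal F_n$. All expectations are assumed finite. Sequential posted pricing with linear pricing uses a price $p>0$ per unit and an ordering $\pi$: agents act in the order $\pi$; when agent $i$ acts she may buy any fraction of the still-unallocated part of the item, paying $p$ per unit, with utility $v_i(z)-pz$. $y^*_i(v_i,p)\in[0,1]$ denotes a maximizer of $z\mapsto v_i(z)-pz$ over $[0,1]$ (fixed measurable selection). With $B_\pi(i)$ the set of agents acting before $i$ in $\pi$, agent $i$ buys $y_i(\mathbf v,p,\pi)=\min\{y^*_i(v_i,p),\max\{0,1-\sum_{j\in B_\pi(i)}y^*_j(v_j,p)\}\}$. $\mathrm{SW}(\mathbf v,p,\pi)=\sum_i v_i(y_i(\mathbf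 v,p,\pi))$. $x(\mathbf v)$ is a welfare-maximizing allocation ($x_i(\mathbf v)\ge0$, $\sum_i x_i(\mathbf v)=1$, maximizing $\sum_i v_i(x_i)$) and $\mathrm{SW}^*(\mathbf v)=\sum_i v_i(x_i(\mathbf v))$. *)

theory Defs
  imports "HOL-Probability.Probability"
begin

text \<open>A valuation is a
function real => real of which only its values on [0,1] matter.
An ordering is a permutation pi of the agents; agent j acts before agent i
iff pi j < pi i (pi maps an agent to its position).\<close>

definition rho2 :: real where
  "rho2 = 1 / (1 + 2 * ln 2)"

definition valuation :: "(real \<Rightarrow> real) \<Rightarrow> bool" where
  "valuation f \<longleftrightarrow> (\<forall>z\<in>{0..1}. f z \<ge> 0) \<and> mono_on {0..1} f \<and> concave_on {0..1} f"

definition is_opt_demand :: "(real \<Rightarrow> real) \<Rightarrow> real \<Rightarrow> real \<Rightarrow> bool" where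
  "is_opt_demand f q y \<longleftrightarrow> y \<in> {0..1} \<and> (\<forall>z\<in>{0..1}. f z - q * z \<le> f y - q * y)"

definition before :: "nat \<Rightarrow> (nat \<Rightarrow> nat) \<Rightarrow> nat \<Rightarrow> nat set" where
  "before n \<pi> i = {j \<in> {..<n}. \<pi> j < \<pi> i}"

definition y_alloc ::
  "nat \<Rightarrow> (nat \<Rightarrow> (real \<Rightarrow> real) \<Rightarrow> real \<Rightarrow> real) \<Rightarrow> (nat \<Rightarrow> real \<Rightarrow> real)
     \<Rightarrow> real \<Rightarrow> (nat \<Rightarrow> nat) \<Rightarrow> nat \<Rightarrow> real" where
  "y_alloc n ystar v p \<pi> i =
     min (ystar i (v i) p) (max 0 (1 - (\<Sum>j\<in>before n \<pi> i. ystar j (v j) p)))"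

definition SW ::
  "nat \<Rightarrow> (nat \<Rightarrow> (real \<Rightarrow> real) \<Rightarrow> real \<Rightarrow> real) \<Rightarrow> (nat \<Rightarrow> real \<Rightarrow> real)
     \<Rightarrow> real \<Rightarrow> (nat \<Rightarrow> nat) \<Rightarrow> real" where
  "SW n ystar v p \<pi> = (\<Sum>i<n. v i (y_alloc n ystar v p \<pi> i))"

text \<open>Optimal welfare: value of a welfare-maximizing allocation (the supremum,
which is attained).\<close>
definition SW_opt :: "nat \<Rightarrow> (nat \<Rightarrow> real \<Rightarrow> real) \<Rightarrow> real" where
  "SW_opt n v = Sup {(\<Sum>i<n. v i (x i)) | x. (\<forall>i<n. x i \<ge> 0) \<and> (\<Sum>i<n. x i) = 1}"

definition perms :: "nat \<Rightarrow> (nat \<Rightarrow> nat) set" where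
  "perms n = {\<pi>. \<pi> permutes {..<n}}"

definition avg_perm :: "nat \<Rightarrow> ((nat \<Rightarrow> nat) \<Rightarrow> real) \<Rightarrow> real" where
  "avg_perm n g = (\<Sum>\<pi>\<in>perms n. g \<pi>) / real (card (perms n))"

end

theory Submission
  imports Defs
begin
lemma val_nonneg: "valuation f \<Longrightarrow> z \<in> {0..1} \<Longrightarrow> f z \<ge> 0"
  by (simp add: valuation_def)

lemma val_mono: "valuation f \<Longrightarrow> 0 \<le> x \<Longrightarrow> x \<le> y \<Longrightarrow> y \<le> 1 \<Longrightarrow> f x \<le> f y"
  unfolding valuation_def by (auto intro: mono_onD)

lemma val_conc: "valuation f \<Longrightarrow> 0 \<le> t \<Longrightarrow> t \<le> 1 \<Longrightarrow> a \<in> {0..1} \<Longrightarrow> b \<in> {0..1} \<Longrightarrow>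
   f ((1 - t) * a + t * b) \<ge> (1 - t) * f a + t * f b"
  unfolding valuation_def using concave_onD[of "{0..1}" f t a b] by simp

lemma val_scale: assumes "valuation f" "0 \<le> t" "t \<le> 1" "0 \<le> x" "x \<le> 1"
  shows "f (t * x) \<ge> t * f x"
proof -
  have "f ((1 - t) * 0 + t * x) \<ge> (1 - t) * f 0 + t * f x"
    using val_conc[OF assms(1-3), of 0 x] assms by auto
  moreover have "f 0 \<ge> 0" using val_nonneg[OF assms(1)] by auto
  moreover have "(1-t) * f 0 \<ge> 0" using calculation assms by auto
  ultimately show ?thesis by simp
qed

lemma chord:
  assumes v: "valuation f" and h: "0 < h" "h \<le> x" "x \<le> 1" and z: "0 \<le> z" "z \<le> 1"
  shows "f z \<le> f x + ((f x - f (x - h)) / h) * (z - x) + (f x - f (x - h))"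
proof -
  define s where "s = (f x - f (x - h)) / h"
  have mxh: "f (x - h) \<le> f x" using val_mono[OF v, of "x-h" x] h by auto
  have s0: "s \<ge> 0" unfolding s_def using mxh h by auto
  have sh: "s * h = f x - f (x - h)" unfolding s_def using h by auto
  consider "z > x" | "z \<le> x - h" | "x - h < z \<and> z \<le> x" by linarith
  then show ?thesis
  proof cases
    case 1
    define t where "t = h / (z - x + h)"
    have t01: "0 \<le> t" "t \<le> 1" unfolding t_def using 1 h by auto
    have d: "z - x + h > 0" using 1 h by auto
    have tt: "t * (z - x + h) = h" unfolding t_def using d by simp
    have "(1 - t) * (x - h) + t * z = x - h + t * (z - x + h)" by (simp add: algebra_simps)
    hence xe: "(1 - t) * (x - h) + t * z = x" using tt by simp
    have "f ((1 - t) * (x - h) + t * z) \<ge> (1 - t) * f (x - h) + t * f z"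
      by (rule val_conc[OF v t01]) (use h z in auto)
    hence c: "f x \<ge> (1 - t) * f (x - h) + t * f z" using xe by simp
    have "t * (f z - f x) \<le> (1 - t) * (f x - f (x - h))" using c by (simp add: algebra_simps)
    hence "t * (f z - f x) * (z - x + h) \<le> (1 - t) * (f x - f (x - h)) * (z - x + h)"
      using d by (intro mult_right_mono) auto
    moreover have "t * (f z - f x) * (z - x + h) = (t * (z - x + h)) * (f z - f x)" by (simp add: ac_simps)
    moreover have "(1 - t) * (f x - f (x - h)) * (z - x + h) = (z - x + h - t * (z - x + h)) * (f x - f (x - h))"
      by (simp add: algebra_simps)
    ultimately have "h * (f z - f x) \<le> (z - x) * (f x - f (x - h))" using tt by simp
    hence "(f z - f x) * h \<le> (z - x) * (f x - f (x - h))" by (simp add: ac_simps)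
    hence "f z - f x \<le> (z - x) * (f x - f (x - h)) / h" using h by (simp add: pos_le_divide_eq)
    hence "f z - f x \<le> s * (z - x)" unfolding s_def by (simp add: ac_simps)
    thus ?thesis unfolding s_def[symmetric] using mxh by linarith
  next
    case 2
    define t where "t = (x - h - z) / (x - z)"
    have t01: "0 \<le> t" "t \<le> 1" unfolding t_def using 2 h by auto
    have d: "x - z > 0" using 2 h by auto
    have tt: "t * (x - z) = x - h - z" unfolding t_def using d by simp
    have "(1 - t) * z + t * x = z + t * (x - z)" by (simp add: algebra_simps)
    hence xe: "(1 - t) * z + t * x = x - h" using tt by simp
    have "f ((1 - t) * z + t * x) \<ge> (1 - t) * f z + t * f x"
      by (rule val_conc[OF v t01]) (use h z in auto)
    hence c: "f (x - h) \<ge> (1 - t) * f z + t * f x" using xe by simp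
    have "(1 - t) * (f x - f z) \<ge> f x - f (x - h)" using c by (simp add: algebra_simps)
    hence "(1 - t) * (f x - f z) * (x - z) \<ge> (f x - f (x - h)) * (x - z)"
      using d by (intro mult_right_mono) auto
    moreover have "(1 - t) * (f x - f z) * (x - z) = ((1 - t) * (x - z)) * (f x - f z)"
      by (simp only: ac_simps)
    moreover have "(1 - t) * (x - z) = h" using tt by (simp add: algebra_simps)
    ultimately have "h * (f x - f z) \<ge> (f x - f (x - h)) * (x - z)" by simp
    hence "h * (f x - f z) \<ge> (x - z) * (f x - f (x - h))" by (simp add: ac_simps)
    hence "(f x - f z) * h \<ge> (x - z) * (f x - f (x - h))" by (simp add: ac_simps)
    hence "f x - f z \<ge> (x - z) * (f x - f (x - h)) / h" using h by (simp add: pos_divide_le_eq)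
    hence "f x - f z \<ge> s * (x - z)" unfolding s_def by (simp add: ac_simps)
    thus ?thesis unfolding s_def[symmetric] using mxh by (simp add: algebra_simps)
  next
    case 3
    have "f z \<le> f x" using val_mono[OF v, of z x] 3 z h by auto
    moreover have "s * (z - x) \<ge> - (s * h)" using s0 3
      by (metis minus_diff_eq mult_left_mono mult_minus_right neg_le_iff_le diff_le_eq add.commute le_diff_eq less_imp_le)
    ultimately show ?thesis unfolding s_def[symmetric] using sh by linarith
  qed
qed

lemma leftcont:
  assumes v: "valuation f" and h: "0 \<le> h" "h \<le> x" "x \<le> 1"
  shows "f x - f (x - h) \<le> (h / x) * f x"
proof (cases "x = 0")
  case True then show ?thesis using h by auto
next
  case False
  hence x0: "x > 0" using h by auto
  have "f ((1 - h/x) * x + (h/x) * 0) \<ge> (1 - h/x) * f x + (h/x) * f 0"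
    by (rule val_conc[OF v]) (use h x0 in auto)
  moreover have "(1 - h/x) * x + (h/x) * 0 = x - h" using x0 by (simp add: field_simps)
  moreover have "(h/x) * f 0 \<ge> 0" using val_nonneg[OF v, of 0] h x0 by auto
  ultimately show ?thesis by (simp add: algebra_simps)
qed

definition Uv :: "(real \<Rightarrow> real) \<Rightarrow> (real \<Rightarrow> real) \<Rightarrow> real \<Rightarrow> real" where
  "Uv f y q = f (y q) - q * y q"

definition RS :: "(real \<Rightarrow> real) \<Rightarrow> real \<Rightarrow> real \<Rightarrow> nat \<Rightarrow> real" where
  "RS y a b N = (\<Sum>k<Suc N. ((b - a) / real (Suc N)) * y (a + real (Suc k) * ((b - a) / real (Suc N))))"

locale dem =
  fixes f :: "real \<Rightarrow> real" and y :: "real \<Rightarrow> real"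
  assumes v: "valuation f"
    and opt: "\<And>q. q > 0 \<Longrightarrow> is_opt_demand f q (y q)"
begin

lemma y01: "q > 0 \<Longrightarrow> 0 \<le> y q \<and> y q \<le> 1"
  using opt[of q] by (auto simp: is_opt_demand_def)

lemma U_ge: "q > 0 \<Longrightarrow> 0 \<le> z \<Longrightarrow> z \<le> 1 \<Longrightarrow> f z - q * z \<le> Uv f y q"
  using opt[of q] by (auto simp: is_opt_demand_def Uv_def)

lemma U_nonneg: "q > 0 \<Longrightarrow> Uv f y q \<ge> 0"
  using U_ge[of q 0] val_nonneg[OF v, of 0] by auto

lemma U_diff: assumes "0 < a" "a \<le> b"
  shows "(b - a) * y b \<le> Uv f y a - Uv f y b" "Uv f y a - Uv f y b \<le> (b - a) * y a"
proof -
  have "f (y b) - a * y b \<le> Uv f y a" using U_ge[of a "y b"] y01[of b] assms by auto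
  thus "(b - a) * y b \<le> Uv f y a - Uv f y b" by (simp add: Uv_def algebra_simps)
  have "f (y a) - b * y a \<le> Uv f y b" using U_ge[of b "y a"] y01[of a] assms by auto
  thus "Uv f y a - Uv f y b \<le> (b - a) * y a" by (simp add: Uv_def algebra_simps)
qed

lemma RS_lim: assumes "0 < a" "a \<le> b"
  shows "RS y a b \<longlonglongrightarrow> Uv f y a - Uv f y b"
proof (rule real_tendsto_sandwich)
  define D where "D = Uv f y a - Uv f y b"
  have bnd: "D - (b - a) / real (Suc N) \<le> RS y a b N \<and> RS y a b N \<le> D" for N
  proof -
    define m where "m = Suc N"
    define h where "h = (b - a) / real m"
    define t where "t k = a + real k * h" for k :: nat
    have h0: "h \<ge> 0" unfolding h_def m_def using assms by auto
    have tpos: "t k > 0" for k unfolding t_def using h0 assms by (auto intro: add_pos_nonneg)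
    have t0: "t 0 = a" unfolding t_def by simp
    have tm: "t m = b" unfolding t_def h_def m_def by simp
    have tS: "t (Suc k) - t k = h" for k unfolding t_def by (simp add: algebra_simps)
    have tle: "t k \<le> t (Suc k)" for k using tS[of k] h0 by linarith
    have rs: "RS y a b N = (\<Sum>k<m. h * y (t (Suc k)))"
      unfolding RS_def m_def h_def t_def by simp
    have tel: "(\<Sum>k<m. Uv f y (t k) - Uv f y (t (Suc k))) = D"
      by (subst sum_lessThan_telescope') (simp add: t0 tm D_def)
    have lo: "(\<Sum>k<m. h * y (t (Suc k))) \<le> D"
      unfolding tel[symmetric]
      by (rule sum_mono) (use U_diff(1)[OF tpos tle] tS in auto)
    have hi: "D \<le> (\<Sum>k<m. h * y (t k))"
      unfolding tel[symmetric]
      by (rule sum_mono) (use U_diff(2)[OF tpos tle] tS in auto)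
    have "(\<Sum>k<m. h * y (t k)) - (\<Sum>k<m. h * y (t (Suc k))) = h * y (t 0) - h * y (t m)"
      unfolding sum_subtractf[symmetric] by (rule sum_lessThan_telescope')
    also have "\<dots> \<le> h" using y01[OF tpos, of 0] y01[OF tpos, of m] h0
      by (smt (verit, best) mult_left_le mult_nonneg_nonneg)
    finally show ?thesis using lo hi rs unfolding h_def m_def by linarith
  qed
  show "\<forall>\<^sub>F n in sequentially. D - (b - a) / real (Suc n) \<le> RS y a b n" using bnd by auto
  show "\<forall>\<^sub>F n in sequentially. RS y a b n \<le> D" using bnd by auto
  show "(\<lambda>n. D) \<longlonglongrightarrow> D" by simp
  have "(\<lambda>n. (b - a) / real (Suc n)) \<longlonglongrightarrow> 0"
    using LIMSEQ_Suc[OF lim_const_over_n[of "b - a"]] by simp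
  then show "(\<lambda>n. D - (b - a) / real (Suc n)) \<longlonglongrightarrow> D"
    using tendsto_diff[of "\<lambda>n. D" D sequentially] by fastforce
qed

lemma inf_approx:
  assumes x: "0 < x" "x \<le> 1" and e: "e > 0"
  shows "\<exists>q\<in>\<rat>. q > 0 \<and> Uv f y q + q * x \<le> f x + e"
proof -
  have fx0: "f x \<ge> 0" using val_nonneg[OF v, of x] x by auto
  define c where "c = min 1 (e / (2 * (f x + 1)))"
  have c0: "0 < c" "c \<le> 1" unfolding c_def using e fx0 by auto
  have cf: "c * f x \<le> e / 2"
  proof -
    have "c * f x \<le> (e / (2 * (f x + 1))) * f x" unfolding c_def using fx0
      by (intro mult_right_mono) auto
    also have "\<dots> = (e / 2) * (f x / (f x + 1))" using fx0 by (simp add: field_simps)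
    also have "\<dots> \<le> (e / 2) * 1" using fx0 e by (intro mult_left_mono) auto
    finally show ?thesis by simp
  qed
  define h where "h = x * c"
  have h: "0 < h" "h \<le> x" unfolding h_def using x c0 by (auto simp: mult_left_le)
  define s where "s = (f x - f (x - h)) / h"
  have mxh: "f (x - h) \<le> f x" using val_mono[OF v, of "x-h" x] h x by auto
  have s0: "s \<ge> 0" unfolding s_def using mxh h by auto
  have lc: "f x - f (x - h) \<le> e / 2"
    using leftcont[OF v, of h x] h x cf unfolding h_def by (simp add: field_simps)
  obtain q where q: "q \<in> \<rat>" "s < q" "q < s + e / 2"
    using Rats_dense_in_real[of s "s + e/2"] e by auto
  have q0: "q > 0" using q s0 by auto
  define z where "z = y q"
  have z: "0 \<le> z" "z \<le> 1" unfolding z_def using y01[OF q0] by auto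
  have ch: "f z \<le> f x + s * (z - x) + (f x - f (x - h))"
    unfolding s_def by (rule chord[OF v h x(2) z])
  have "(q - s) * (x - z) \<le> (q - s) * 1" using q z x by (intro mult_left_mono) auto
  hence "Uv f y q + q * x \<le> f x + (q - s) + (f x - f (x - h))"
    using ch unfolding Uv_def z_def[symmetric] by (simp add: algebra_simps)
  also have "\<dots> \<le> f x + e" using q lc by linarith
  finally show ?thesis using q q0 by blast
qed

lemma inf_formula:
  assumes x: "0 < x" "x \<le> 1" and p: "p > 0"
  shows "(INF q\<in>{q\<in>\<rat>. q > 0}. Uv f y q - Uv f y p + q * x) = f x - Uv f y p"
proof (rule antisym)
  have lb: "f x - Uv f y p \<le> Uv f y q - Uv f y p + q * x" if "q \<in> {q\<in>\<rat>. q > 0}" for q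
    using U_ge[of q x] that x by auto
  have bdd: "bdd_below ((\<lambda>q. Uv f y q - Uv f y p + q * x) ` {q\<in>\<rat>. q > 0})"
    by (rule bdd_belowI2[where m="f x - Uv f y p"]) (rule lb)
  show "f x - Uv f y p \<le> (INF q\<in>{q\<in>\<rat>. q > 0}. Uv f y q - Uv f y p + q * x)"
    by (rule cINF_greatest) (use lb Rats_dense_in_real[of 0 1] in auto)
  show "(INF q\<in>{q\<in>\<rat>. q > 0}. Uv f y q - Uv f y p + q * x) \<le> f x - Uv f y p"
  proof (rule field_le_epsilon)
    fix e :: real assume "e > 0"
    then obtain q where q: "q \<in> \<rat>" "q > 0" "Uv f y q + q * x \<le> f x + e"
      using inf_approx[OF x] by blast
    have "(INF q\<in>{q\<in>\<rat>. q > 0}. Uv f y q - Uv f y p + q * x) \<le> Uv f y q - Uv f y p + q * x"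
      by (rule cINF_lower[OF bdd]) (use q in auto)
    also have "\<dots> \<le> f x - Uv f y p + e" using q by linarith
    finally show "(INF q\<in>{q\<in>\<rat>. q > 0}. Uv f y q - Uv f y p + q * x) \<le> f x - Uv f y p + e" .
  qed
qed

end

definition Cset :: "nat set \<Rightarrow> (nat \<Rightarrow> real) set" where
  "Cset J = {c \<in> PiE J (\<lambda>_. \<rat>). (\<forall>j\<in>J. c j \<ge> 0) \<and> sum c J < 1}"

lemma Cset_countable: "finite J \<Longrightarrow> countable (Cset J)"
  unfolding Cset_def
  by (rule countable_subset[OF _ countable_PiE[of J "\<lambda>_. \<rat>"]]) (auto simp: countable_rat)

lemma Cset_ne: "(\<lambda>j\<in>J. 0) \<in> Cset J"
  unfolding Cset_def by auto

lemma sw_split: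
  fixes n :: nat and w :: "nat \<Rightarrow> real \<Rightarrow> real" and x :: "nat \<Rightarrow> real"
  assumes "i < n"
  shows "(\<Sum>k<n. (w(i:=f)) k (x k)) = f (x i) + (\<Sum>j\<in>{..<n}-{i}. w j (x j))"
proof -
  have "{..<n} = insert i ({..<n}-{i})" using assms by auto
  hence "(\<Sum>k<n. (w(i:=f)) k (x k)) = (\<Sum>k\<in>insert i ({..<n}-{i}). (w(i:=f)) k (x k))" by simp
  also have "\<dots> = f (x i) + (\<Sum>j\<in>{..<n}-{i}. (w(i:=f)) j (x j))" by (subst sum.insert) auto
  also have "(\<Sum>j\<in>{..<n}-{i}. (w(i:=f)) j (x j)) = (\<Sum>j\<in>{..<n}-{i}. w j (x j))"
    by (rule sum.cong) auto
  finally show ?thesis .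
qed

lemma sec_sup:
  fixes n :: nat and w :: "nat \<Rightarrow> real \<Rightarrow> real"
  assumes i: "i < n" and w: "\<And>j. j \<in> {..<n}-{i} \<Longrightarrow> valuation (w j)" and f: "valuation f"
  defines "J \<equiv> {..<n}-{i}"
  shows "SW_opt n (w(i:=f)) = (SUP c\<in>Cset J. f (1 - sum c J) + (\<Sum>j\<in>J. w j (c j)))"
    and "bdd_above ((\<lambda>c. f (1 - sum c J) + (\<Sum>j\<in>J. w j (c j))) ` Cset J)"
proof -
  define A where "A = {(\<Sum>k<n. (w(i:=f)) k (x k)) | x. (\<forall>k<n. x k \<ge> 0) \<and> (\<Sum>k<n. x k) = 1}"
  define g where "g c = f (1 - sum c J) + (\<Sum>j\<in>J. w j (c j))" for c
  have finJ: "finite J" unfolding J_def by auto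
  have iJ: "i \<notin> J" unfolding J_def by auto
  have wJ: "\<And>j. j \<in> J \<Longrightarrow> valuation (w j)" using w unfolding J_def by auto
  have le1: "x k \<le> 1" if "\<forall>k<n. x k \<ge> 0" "(\<Sum>k<n. x k) = 1" "k < n" for x :: "nat \<Rightarrow> real" and k
    using member_le_sum[of k "{..<n}" x] that by auto
  have sumsplit: "(\<Sum>k<n. x k) = x i + sum x J" for x :: "nat \<Rightarrow> real"
    using sw_split[OF i, of "\<lambda>_ z. z" "\<lambda>z. z" x] unfolding J_def by simp
  have Aval: "(\<Sum>k<n. (w(i:=f)) k (x k)) = f (x i) + (\<Sum>j\<in>J. w j (x j))" for x
    using sw_split[OF i] unfolding J_def .
  define B where "B = f 1 + (\<Sum>j\<in>J. w j 1)"
  have Abnd: "a \<le> B" if aA: "a \<in> A" for a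
  proof -
    obtain x where x: "a = (\<Sum>k<n. (w(i:=f)) k (x k))" "\<forall>k<n. x k \<ge> 0" "(\<Sum>k<n. x k) = 1"
      using aA unfolding A_def by blast
    have "f (x i) \<le> f 1" using val_mono[OF f, of "x i" 1] x le1[OF x(2,3) i] i by auto
    moreover have "(\<Sum>j\<in>J. w j (x j)) \<le> (\<Sum>j\<in>J. w j 1)"
      by (rule sum_mono) (use val_mono[OF wJ] x le1[OF x(2,3)] in \<open>auto simp: J_def\<close>)
    ultimately show ?thesis unfolding x(1) Aval B_def by linarith
  qed
  have bddA: "bdd_above A" unfolding bdd_above_def using Abnd by blast
  have gA: "g c \<in> A" if c: "c \<in> Cset J" for c
  proof -
    define x where "x = c(i := 1 - sum c J)"
    have cJ: "\<forall>j\<in>J. c j \<ge> 0" "sum c J < 1" using c unfolding Cset_def by auto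
    have "sum x J = sum c J" unfolding x_def by (rule sum.cong) (use iJ in auto)
    hence s1: "(\<Sum>k<n. x k) = 1" using sumsplit[of x] unfolding x_def by simp
    have nn: "\<forall>k<n. x k \<ge> 0" unfolding x_def using cJ by (auto simp: J_def)
    have "(\<Sum>j\<in>J. w j (x j)) = (\<Sum>j\<in>J. w j (c j))" unfolding x_def by (rule sum.cong) (use iJ in auto)
    hence "g c = (\<Sum>k<n. (w(i:=f)) k (x k))" unfolding g_def Aval x_def by simp
    thus ?thesis unfolding A_def using nn s1 by blast
  qed
  have bddg: "bdd_above (g ` Cset J)" by (rule bdd_aboveI2[where M=B]) (use gA Abnd in blast)
  have Cne: "Cset J \<noteq> {}" using Cset_ne by blast
  have Ane: "A \<noteq> {}" using gA Cne by blast
  have approx: "\<exists>c\<in>Cset J. a \<le> g c + d * (\<Sum>j\<in>J. w j 1)"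
    if aA: "a \<in> A" and d: "0 < d" "d < 1" for a d
  proof -
    obtain x where x: "a = (\<Sum>k<n. (w(i:=f)) k (x k))" "\<forall>k<n. x k \<ge> 0" "(\<Sum>k<n. x k) = 1"
      using aA unfolding A_def by blast
    have xJ: "0 \<le> x j" "x j \<le> 1" if "j \<in> J" for j using x(2) le1[OF x(2,3)] that by (auto simp: J_def)
    have xi: "0 \<le> x i" "x i \<le> 1" using x(2) le1[OF x(2,3)] i by auto
    have "\<forall>j. \<exists>r. 0 < x j \<longrightarrow> r \<in> \<rat> \<and> (1 - d) * x j < r \<and> r < x j"
    proof
      fix j show "\<exists>r. 0 < x j \<longrightarrow> r \<in> \<rat> \<and> (1 - d) * x j < r \<and> r < x j"
      proof (cases "0 < x j")
        case True
        hence "(1 - d) * x j < x j" using d by (simp add: mult_less_cancel_right2)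
        then show ?thesis using Rats_dense_in_real by blast
      qed auto
    qed
    then obtain r where r: "\<And>j. 0 < x j \<Longrightarrow> r j \<in> \<rat> \<and> (1 - d) * x j < r j \<and> r j < x j"
      by metis
    define c where "c = (\<lambda>j\<in>J. if 0 < x j then r j else 0)"
    have cnn: "0 \<le> c j" if "j \<in> J" for j
    proof (cases "0 < x j")
      case True
      hence "0 \<le> (1 - d) * x j" using d by auto
      then show ?thesis using r[OF True] that unfolding c_def by auto
    qed (use that in \<open>auto simp: c_def\<close>)
    have cle: "c j \<le> x j" if "j \<in> J" for j
      using r[of j] xJ[OF that] that unfolding c_def by auto
    have sxJ: "sum x J = 1 - x i" using sumsplit[of x] x(3) by simp
    have scJ: "sum c J < 1"
    proof (cases "\<exists>j\<in>J. 0 < x j")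
      case True
      have "sum c J < sum x J"
      proof (rule sum_strict_mono_ex1[OF finJ])
        show "\<forall>j\<in>J. c j \<le> x j" using cle by auto
        from True obtain j where "j \<in> J" "0 < x j" by auto
        thus "\<exists>j\<in>J. c j < x j" using r[of j] unfolding c_def by auto
      qed
      thus ?thesis using sxJ xi by linarith
    next
      case False
      hence "sum c J = 0" unfolding c_def by (intro sum.neutral) auto
      thus ?thesis by simp
    qed
    have cC: "c \<in> Cset J" unfolding Cset_def
    proof (intro CollectI conjI ballI)
      show "c \<in> PiE J (\<lambda>_. \<rat>)" unfolding c_def using r by (auto simp: PiE_def)
    qed (use cnn scJ in auto)
    have sc0: "sum c J \<ge> 0" using cnn by (intro sum_nonneg) auto
    have f1: "f (x i) \<le> f (1 - sum c J)"
      using val_mono[OF f, of "x i" "1 - sum c J"] xi sc0 sxJ cle sum_mono[of J c x] by auto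
    have wc: "(1 - d) * w j (x j) \<le> w j (c j)" if j: "j \<in> J" for j
    proof (cases "0 < x j")
      case True
      define t where "t = r j / x j"
      have t: "1 - d \<le> t" "t \<le> 1" unfolding t_def using r[OF True] True
        by (auto simp: field_simps)
      have cj: "c j = t * x j" unfolding c_def t_def using True j by auto
      have "w j (t * x j) \<ge> t * w j (x j)"
        by (rule val_scale[OF wJ[OF j]]) (use t d xJ[OF j] in auto)
      moreover have "(1 - d) * w j (x j) \<le> t * w j (x j)"
        using t val_nonneg[OF wJ[OF j], of "x j"] xJ[OF j] by (intro mult_right_mono) auto
      ultimately show ?thesis using cj by simp
    next
      case False
      hence "x j = 0" "c j = 0" using xJ[OF j] j unfolding c_def by auto
      moreover have "w j 0 \<ge> 0" using val_nonneg[OF wJ[OF j], of 0] by auto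
      moreover have "(1 - d) * w j 0 \<le> 1 * w j 0" using d calculation(3) by (intro mult_right_mono) auto
      ultimately show ?thesis by simp
    qed
    have "(\<Sum>j\<in>J. (1 - d) * w j (x j)) \<le> (\<Sum>j\<in>J. w j (c j))" by (rule sum_mono) (rule wc)
    moreover have "(\<Sum>j\<in>J. (1 - d) * w j (x j)) = (\<Sum>j\<in>J. w j (x j)) - d * (\<Sum>j\<in>J. w j (x j))"
      by (simp add: sum_subtractf sum_distrib_left left_diff_distrib)
    moreover have "(\<Sum>j\<in>J. w j (x j)) \<le> (\<Sum>j\<in>J. w j 1)"
      by (rule sum_mono) (use val_mono[OF wJ] xJ in auto)
    moreover have "d * (\<Sum>j\<in>J. w j (x j)) \<le> d * (\<Sum>j\<in>J. w j 1)"
      using calculation(3) d by (intro mult_left_mono) auto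
    ultimately have "a \<le> g c + d * (\<Sum>j\<in>J. w j 1)"
      unfolding x(1) Aval g_def using f1 by linarith
    thus ?thesis using cC by blast
  qed
  show "bdd_above (g ` Cset J)" using bddg unfolding g_def .
  show "SW_opt n (w(i:=f)) = (SUP c\<in>Cset J. f (1 - sum c J) + (\<Sum>j\<in>J. w j (c j)))"
    unfolding g_def[symmetric]
  proof (rule antisym)
    show "(SUP c\<in>Cset J. g c) \<le> SW_opt n (w(i:=f))"
      unfolding SW_opt_def A_def[symmetric]
      by (rule cSUP_least[OF Cne]) (rule cSup_upper[OF gA bddA])
    show "SW_opt n (w(i:=f)) \<le> (SUP c\<in>Cset J. g c)"
      unfolding SW_opt_def A_def[symmetric]
    proof (rule cSup_least[OF Ane])
      fix a assume aA: "a \<in> A"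
      define Bw where "Bw = (\<Sum>j\<in>J. w j 1)"
      have Bw0: "Bw \<ge> 0" unfolding Bw_def using val_nonneg[OF wJ] by (intro sum_nonneg) auto
      show "a \<le> (SUP c\<in>Cset J. g c)"
      proof (rule field_le_epsilon)
        fix e :: real assume e: "e > 0"
        define d where "d = min (1/2) (e / (Bw + 1))"
        have d: "0 < d" "d < 1" unfolding d_def using e Bw0 by auto
        obtain c where c: "c \<in> Cset J" "a \<le> g c + d * Bw"
          using approx[OF aA d] unfolding Bw_def by blast
        have "d * Bw \<le> (e / (Bw + 1)) * Bw" unfolding d_def using Bw0 by (intro mult_right_mono) auto
        also have "\<dots> \<le> e" using Bw0 e by (simp add: field_simps)
        finally have "d * Bw \<le> e" .
        moreover have "g c \<le> (SUP c\<in>Cset J. g c)" by (rule cSUP_upper[OF c(1) bddg])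
        ultimately show "a \<le> (SUP c\<in>Cset J. g c) + e" using c by linarith
      qed
    qed
  qed
qed

lemma cSUP_minus_const:
  fixes h :: "'a \<Rightarrow> real"
  assumes "A \<noteq> {}" "bdd_above (h ` A)"
  shows "(SUP x\<in>A. h x - c) = (SUP x\<in>A. h x) - c"
proof (rule antisym)
  show "(SUP x\<in>A. h x - c) \<le> (SUP x\<in>A. h x) - c"
    by (rule cSUP_least[OF assms(1)]) (use cSUP_upper[OF _ assms(2)] in fastforce)
  have b2: "bdd_above ((\<lambda>x. h x - c) ` A)"
    using assms(2) unfolding bdd_above_def by (auto intro: diff_right_mono)
  have "(SUP x\<in>A. h x) \<le> (SUP x\<in>A. h x - c) + c"
    by (rule cSUP_least[OF assms(1)]) (use cSUP_upper[OF _ b2] in fastforce)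
  thus "(SUP x\<in>A. h x) - c \<le> (SUP x\<in>A. h x - c)" by simp
qed

locale setting =
  fixes n :: nat and F :: "nat \<Rightarrow> (real \<Rightarrow> real) measure"
    and ystar :: "nat \<Rightarrow> (real \<Rightarrow> real) \<Rightarrow> real \<Rightarrow> real" and p :: real
  assumes prob: "\<And>i. i < n \<Longrightarrow> prob_space (F i)"
    and val: "\<And>i f. i < n \<Longrightarrow> f \<in> space (F i) \<Longrightarrow> valuation f"
    and ystar_opt: "\<And>i f q. i < n \<Longrightarrow> f \<in> space (F i) \<Longrightarrow> q > 0 \<Longrightarrow> is_opt_demand f q (ystar i f q)"
    and ystar_meas: "\<And>i q. i < n \<Longrightarrow> q > 0 \<Longrightarrow> (\<lambda>f. ystar i f q) \<in> borel_measurable (F i)"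
    and int_opt: "integrable (PiM {..<n} F) (SW_opt n)"
    and p_pos: "p > 0"
begin

lemma dem_i: "i < n \<Longrightarrow> f \<in> space (F i) \<Longrightarrow> dem f (ystar i f)"
  by unfold_locales (auto intro: val ystar_opt)

lemma RS_meas:
  assumes i: "i < n" and a: "0 < a" "a \<le> b"
  shows "(\<lambda>f. RS (ystar i f) a b N) \<in> borel_measurable (F i)"
proof -
  have pos: "0 < a + real (Suc k) * ((b - a) / real (Suc N))" for k
    using a by (intro add_pos_nonneg) auto
  show ?thesis unfolding RS_def
    by (intro borel_measurable_sum borel_measurable_times borel_measurable_const ystar_meas[OF i pos])
qed

lemma D_meas:
  assumes i: "i < n" and q: "q > 0"
  shows "(\<lambda>f. Uv f (ystar i f) q - Uv f (ystar i f) p) \<in> borel_measurable (F i)"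
proof (cases "p \<le> q")
  case True
  show ?thesis
  proof (rule borel_measurable_LIMSEQ_real)
    fix f assume f: "f \<in> space (F i)"
    interpret dem f "ystar i f" by (rule dem_i[OF i f])
    show "(\<lambda>N. - RS (ystar i f) p q N) \<longlonglongrightarrow> Uv f (ystar i f) q - Uv f (ystar i f) p"
      using tendsto_minus[OF RS_lim[OF p_pos True]] by simp
  next
    fix N show "(\<lambda>f. - RS (ystar i f) p q N) \<in> borel_measurable (F i)"
      using RS_meas[OF i p_pos True] by measurable
  qed
next
  case False
  show ?thesis
  proof (rule borel_measurable_LIMSEQ_real)
    fix f assume f: "f \<in> space (F i)"
    interpret dem f "ystar i f" by (rule dem_i[OF i f])
    show "(\<lambda>N. RS (ystar i f) q p N) \<longlonglongrightarrow> Uv f (ystar i f) q - Uv f (ystar i f) p"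
      using RS_lim[OF q] False by simp
  next
    fix N show "(\<lambda>f. RS (ystar i f) q p N) \<in> borel_measurable (F i)"
      using RS_meas[OF i q] False by simp
  qed
qed

lemma U_meas:
  assumes i: "i < n"
  shows "(\<lambda>f. Uv f (ystar i f) p) \<in> borel_measurable (F i)"
proof -
  define J where "J = {..<n} - {i}"
  have finJ: "finite J" unfolding J_def by auto
  have iJ: "i \<notin> J" unfolding J_def by auto
  have insJ: "insert i J = {..<n}" unfolding J_def using i by auto
  have "space (PiM J F) \<noteq> {}"
    unfolding space_PiM PiE_eq_empty_iff using prob_space.not_empty[OF prob] by (auto simp: J_def)
  then obtain w where w: "w \<in> space (PiM J F)" by blast
  have wv: "valuation (w j)" if "j \<in> {..<n} - {i}" for j
    using w that val[of j "w j"] unfolding space_PiM J_def by auto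
  define Qp where "Qp = {q\<in>\<rat>. (q::real) > 0}"
  have cQ: "countable Qp" unfolding Qp_def by (rule countable_subset[OF _ countable_rat]) auto
  define \<phi> where "\<phi> f = SW_opt n (w(i:=f))" for f
  have \<phi>m: "\<phi> \<in> borel_measurable (F i)"
  proof -
    have "(\<lambda>f. w(i:=f)) \<in> measurable (F i) (PiM {..<n} F)"
      using measurable_component_update[OF w iJ] unfolding insJ .
    moreover have "SW_opt n \<in> borel_measurable (PiM {..<n} F)"
      using int_opt by auto
    ultimately show ?thesis unfolding \<phi>_def by (rule measurable_compose)
  qed
  define \<psi> where "\<psi> f = (SUP c\<in>Cset J. (INF q\<in>Qp. Uv f (ystar i f) q - Uv f (ystar i f) p + q * (1 - sum c J))
                          + (\<Sum>j\<in>J. w j (c j)))" for f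
  have key: "\<psi> f = \<phi> f - Uv f (ystar i f) p \<and>
      bdd_above ((\<lambda>c. (INF q\<in>Qp. Uv f (ystar i f) q - Uv f (ystar i f) p + q * (1 - sum c J))
                          + (\<Sum>j\<in>J. w j (c j))) ` Cset J)" if f: "f \<in> space (F i)" for f
  proof -
    interpret dem f "ystar i f" by (rule dem_i[OF i f])
    have fv: "valuation f" by (rule v)
    have inner: "(INF q\<in>Qp. Uv f (ystar i f) q - Uv f (ystar i f) p + q * (1 - sum c J))
                  = f (1 - sum c J) - Uv f (ystar i f) p" if c: "c \<in> Cset J" for c
    proof -
      have "sum c J \<ge> 0" "sum c J < 1" using c unfolding Cset_def by (auto intro: sum_nonneg)
      thus ?thesis unfolding Qp_def by (intro inf_formula p_pos) auto
    qed
    note ss = sec_sup[where n=n and w=w and i=i and f=f, OF i wv fv, folded J_def]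
    have eq: "(\<lambda>c. (INF q\<in>Qp. Uv f (ystar i f) q - Uv f (ystar i f) p + q * (1 - sum c J))
                          + (\<Sum>j\<in>J. w j (c j))) ` Cset J =
              (\<lambda>c. f (1 - sum c J) + (\<Sum>j\<in>J. w j (c j)) - Uv f (ystar i f) p) ` Cset J"
      using inner by (auto simp: image_def)
    have "\<psi> f = (SUP c\<in>Cset J. f (1 - sum c J) + (\<Sum>j\<in>J. w j (c j)) - Uv f (ystar i f) p)"
      unfolding \<psi>_def using eq by simp
    also have "\<dots> = (SUP c\<in>Cset J. f (1 - sum c J) + (\<Sum>j\<in>J. w j (c j))) - Uv f (ystar i f) p"
      by (rule cSUP_minus_const[where h="\<lambda>c. f (1 - sum c J) + (\<Sum>j\<in>J. w j (c j))", OF _ ss(2)])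
        (use Cset_ne in blast)
    also have "\<dots> = \<phi> f - Uv f (ystar i f) p" unfolding \<phi>_def using ss(1) by simp
    finally have 1: "\<psi> f = \<phi> f - Uv f (ystar i f) p" .
    have "bdd_above ((\<lambda>c. f (1 - sum c J) + (\<Sum>j\<in>J. w j (c j)) - Uv f (ystar i f) p) ` Cset J)"
    proof -
      obtain M where M: "\<And>c. c \<in> Cset J \<Longrightarrow> f (1 - sum c J) + (\<Sum>j\<in>J. w j (c j)) \<le> M"
        using ss(2) unfolding bdd_above_def by blast
      show ?thesis by (rule bdd_aboveI2[where M="M - Uv f (ystar i f) p"]) (use M in force)
    qed
    with eq 1 show ?thesis by simp
  qed
  have \<psi>m: "\<psi> \<in> borel_measurable (F i)"
    unfolding \<psi>_def
  proof (rule borel_measurable_cSUP)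
    show "countable (Cset J)" by (rule Cset_countable[OF finJ])
    fix c assume "c \<in> Cset J"
    show "(\<lambda>f. (INF q\<in>Qp. Uv f (ystar i f) q - Uv f (ystar i f) p + q * (1 - sum c J))
                          + (\<Sum>j\<in>J. w j (c j))) \<in> borel_measurable (F i)"
    proof -
      have m1: "(\<lambda>f. Uv f (ystar i f) q - Uv f (ystar i f) p + q * (1 - sum c J)) \<in> borel_measurable (F i)"
        if "q \<in> Qp" for q
      proof -
        have q: "q > 0" using that unfolding Qp_def by auto
        show ?thesis using D_meas[OF i q] by measurable
      qed
      have "(\<lambda>f. (INF q\<in>Qp. Uv f (ystar i f) q - Uv f (ystar i f) p + q * (1 - sum c J))) \<in> borel_measurable (F i)"
        by (rule borel_measurable_cINF_real[OF cQ]) (rule m1)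
      thus ?thesis by measurable
    qed
  next
    fix f assume fs: "f \<in> space (F i)"
    show "bdd_above ((\<lambda>c. (INF q\<in>Qp. Uv f (ystar i f) q - Uv f (ystar i f) p + q * (1 - sum c J))
                          + (\<Sum>j\<in>J. w j (c j))) ` Cset J)" using key[OF fs] by (rule conjunct2)
  qed
  have "(\<lambda>f. \<phi> f - \<psi> f) \<in> borel_measurable (F i)" using \<phi>m \<psi>m by measurable
  moreover have "\<phi> f - \<psi> f = Uv f (ystar i f) p" if "f \<in> space (F i)" for f using key[OF that] by simp
  ultimately show ?thesis by (simp cong: measurable_cong)
qed

end

lemma before_sub: "before n \<pi> i \<subseteq> {..<n} - {i}"
  unfolding before_def by auto

lemma alloc_sum_aux:
  fixes a :: "nat \<Rightarrow> real"
  assumes perm: "\<pi> permutes {..<n}" and a: "\<And>k. k < n \<Longrightarrow> a k \<ge> 0" and m: "m \<le> n"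
  shows "(\<Sum>k\<in>{k. k < n \<and> \<pi> k < m}. min (a k) (max 0 (1 - (\<Sum>j\<in>before n \<pi> k. a j))))
         = min 1 (\<Sum>k\<in>{k. k < n \<and> \<pi> k < m}. a k)"
  using m
proof (induction m)
  case 0 then show ?case by simp
next
  case (Suc m)
  have mn: "m < n" using Suc by auto
  obtain k0 where k0: "k0 < n" "\<pi> k0 = m"
    using permutes_imp_bij[OF perm] mn unfolding bij_betw_def by (metis imageE lessThan_iff)
  define S where "S = {k. k < n \<and> \<pi> k < m}"
  have S': "{k. k < n \<and> \<pi> k < Suc m} = insert k0 S" unfolding S_def using k0 permutes_inj[OF perm]
    by (auto simp: less_Suc_eq inj_eq)
  have k0S: "k0 \<notin> S" unfolding S_def using k0 by auto
  have finS: "finite S" unfolding S_def by auto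
  have bk0: "before n \<pi> k0 = S" unfolding before_def S_def using k0 by auto
  define A where "A = (\<Sum>k\<in>S. a k)"
  have IH: "(\<Sum>k\<in>S. min (a k) (max 0 (1 - (\<Sum>j\<in>before n \<pi> k. a j)))) = min 1 A"
    using Suc unfolding S_def A_def by auto
  have "(\<Sum>k\<in>{k. k < n \<and> \<pi> k < Suc m}. min (a k) (max 0 (1 - (\<Sum>j\<in>before n \<pi> k. a j))))
      = min (a k0) (max 0 (1 - A)) + min 1 A"
    unfolding S' by (simp add: sum.insert[OF finS k0S] IH bk0 A_def)
  also have "\<dots> = min 1 (a k0 + A)" using a[OF k0(1)] by (auto simp: min_def max_def)
  also have "a k0 + A = (\<Sum>k\<in>{k. k < n \<and> \<pi> k < Suc m}. a k)"
    unfolding S' A_def by (simp add: sum.insert[OF finS k0S])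
  finally show ?case .
qed

lemma alloc_sum:
  assumes perm: "\<pi> permutes {..<n}" and a: "\<And>k. k < n \<Longrightarrow> ystar k (v k) p \<ge> 0"
  shows "(\<Sum>k<n. y_alloc n ystar v p \<pi> k) = min 1 (\<Sum>k<n. ystar k (v k) p)"
proof -
  have e: "{k. k < n \<and> \<pi> k < n} = {..<n}" using permutes_in_image[OF perm] by auto
  show ?thesis
    using alloc_sum_aux[OF perm, of "\<lambda>k. ystar k (v k) p" n] a unfolding e y_alloc_def by simp
qed

lemma r_ge:
  fixes a :: "nat \<Rightarrow> real"
  assumes a: "\<And>k. k < n \<Longrightarrow> a k \<ge> 0"
  shows "max 0 (1 - (\<Sum>j\<in>before n \<pi> i. a j)) \<ge> 1 - min 1 (\<Sum>j\<in>{..<n}-{i}. a j)"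
proof -
  have "(\<Sum>j\<in>before n \<pi> i. a j) \<le> (\<Sum>j\<in>{..<n}-{i}. a j)"
    by (rule sum_mono2[OF _ before_sub]) (use a in auto)
  thus ?thesis by (auto simp: min_def max_def)
qed

lemma perms_fin: "finite (perms n)" and perms_ne: "id \<in> perms n"
  unfolding perms_def by (auto intro: finite_permutations)

lemma card_perms_pos: "card (perms n) > 0"
  using perms_fin perms_ne card_gt_0_iff by blast

lemma avg_const: "avg_perm n (\<lambda>_. c) = c"
  unfolding avg_perm_def using card_perms_pos[of n] by simp

lemma avg_mono: "(\<And>\<pi>. \<pi> \<in> perms n \<Longrightarrow> g \<pi> \<le> h \<pi>) \<Longrightarrow> avg_perm n g \<le> avg_perm n h"
  unfolding avg_perm_def using card_perms_pos[of n]
  by (intro divide_right_mono sum_mono) auto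

lemma avg_add: "avg_perm n (\<lambda>\<pi>. g \<pi> + h \<pi>) = avg_perm n g + avg_perm n h"
  unfolding avg_perm_def by (simp add: sum.distrib add_divide_distrib)

lemma avg_cmult: "avg_perm n (\<lambda>\<pi>. c * g \<pi>) = c * avg_perm n g"
  unfolding avg_perm_def by (simp add: sum_distrib_left)

context dem begin
lemma val_bound:
  assumes p: "p > 0" and r: "0 \<le> r" "r \<le> 1"
  shows "f (min (y p) r) \<ge> p * min (y p) r + r * Uv f y p"
proof -
  define U where "U = Uv f y p"
  define y0 where "y0 = y p"
  have U0: "U \<ge> 0" unfolding U_def using U_nonneg[OF p] .
  have y0: "0 \<le> y0" "y0 \<le> 1" unfolding y0_def using y01[OF p] by auto
  have fy: "f y0 = p * y0 + U" unfolding U_def y0_def Uv_def by simp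
  show ?thesis
  proof (cases "y0 \<le> r")
    case True
    have "r * U \<le> 1 * U" using r U0 by (intro mult_right_mono) auto
    then show ?thesis using True fy unfolding y0_def[symmetric] U_def[symmetric] by (simp add: min_def)
  next
    case False
    define t where "t = r / y0"
    have ypos: "y0 > 0" using False r by auto
    have t: "0 \<le> t" "t \<le> 1" unfolding t_def using False r ypos by auto
    have tr: "t * y0 = r" unfolding t_def using ypos by simp
    have "f (t * y0) \<ge> t * f y0" by (rule val_scale[OF v t y0])
    hence "f r \<ge> t * (p * y0 + U)" using tr fy by simp
    hence "f r \<ge> p * r + t * U" using tr by (simp add: algebra_simps)
    moreover have "r \<le> t" unfolding t_def using ypos y0 r by (simp add: le_divide_eq mult_left_le)
    hence "r * U \<le> t * U" using U0 by (intro mult_right_mono) auto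
    ultimately show ?thesis using False unfolding y0_def[symmetric] U_def[symmetric] by (simp add: min_def)
  qed
qed
end

context setting begin

definition T :: "nat \<Rightarrow> (nat \<Rightarrow> real \<Rightarrow> real) \<Rightarrow> real" where
  "T i v = min 1 (\<Sum>j\<in>{..<n}-{i}. ystar j (v j) p)"

definition Ui :: "nat \<Rightarrow> (nat \<Rightarrow> real \<Rightarrow> real) \<Rightarrow> real" where
  "Ui i v = Uv (v i) (ystar i (v i)) p"

definition avgS :: "(nat \<Rightarrow> real \<Rightarrow> real) \<Rightarrow> real" where
  "avgS v = avg_perm n (\<lambda>\<pi>. \<Sum>i<n. y_alloc n ystar v p \<pi> i)"

lemma ys01: "k < n \<Longrightarrow> v k \<in> space (F k) \<Longrightarrow> 0 \<le> ystar k (v k) p \<and> ystar k (v k) p \<le> 1"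
  using dem.y01[OF dem_i p_pos] by blast

lemma Ui_nonneg: "i < n \<Longrightarrow> v i \<in> space (F i) \<Longrightarrow> Ui i v \<ge> 0"
  unfolding Ui_def using dem.U_nonneg[OF dem_i p_pos] by blast

lemma sw_lower:
  assumes vs: "\<And>k. k < n \<Longrightarrow> v k \<in> space (F k)"
  shows "avg_perm n (SW n ystar v p) \<ge> p * avgS v + (\<Sum>i<n. (1 - T i v) * Ui i v)"
proof -
  have a0: "\<And>k. k < n \<Longrightarrow> ystar k (v k) p \<ge> 0" using ys01 vs by blast
  have each: "SW n ystar v p \<pi> \<ge> p * (\<Sum>i<n. y_alloc n ystar v p \<pi> i) + (\<Sum>i<n. (1 - T i v) * Ui i v)"
    if "\<pi> \<in> perms n" for \<pi>
  proof -
    have "v i (y_alloc n ystar v p \<pi> i) \<ge> p * y_alloc n ystar v p \<pi> i + (1 - T i v) * Ui i v"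
      if i: "i < n" for i
    proof -
      interpret dem "v i" "ystar i (v i)" by (rule dem_i[OF i vs[OF i]])
      define r where "r = max 0 (1 - (\<Sum>j\<in>before n \<pi> i. ystar j (v j) p))"
      have "(\<Sum>j\<in>before n \<pi> i. ystar j (v j) p) \<ge> 0"
        using a0 before_sub[of n \<pi> i] by (intro sum_nonneg) auto
      hence r: "0 \<le> r" "r \<le> 1" unfolding r_def by auto
      have rT: "r \<ge> 1 - T i v" unfolding r_def T_def by (rule r_ge) (rule a0)
      have ya: "y_alloc n ystar v p \<pi> i = min (ystar i (v i) p) r" unfolding y_alloc_def r_def ..
      have "v i (min (ystar i (v i) p) r) \<ge> p * min (ystar i (v i) p) r + r * Ui i v"
        using val_bound[OF p_pos r] unfolding Ui_def .
      moreover have "r * Ui i v \<ge> (1 - T i v) * Ui i v"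
        using rT Ui_nonneg[of i v, OF i vs[OF i]] by (intro mult_right_mono) auto
      ultimately show ?thesis unfolding ya by linarith
    qed
    hence "(\<Sum>i<n. p * y_alloc n ystar v p \<pi> i + (1 - T i v) * Ui i v) \<le> SW n ystar v p \<pi>"
      unfolding SW_def by (intro sum_mono) auto
    thus ?thesis by (simp add: sum.distrib sum_distrib_left)
  qed
  have "avg_perm n (\<lambda>\<pi>. p * (\<Sum>i<n. y_alloc n ystar v p \<pi> i) + (\<Sum>i<n. (1 - T i v) * Ui i v))
        \<le> avg_perm n (SW n ystar v p)" by (rule avg_mono) (rule each)
  thus ?thesis unfolding avg_add avg_cmult avg_const avgS_def .
qed

lemma opt_upper:
  assumes vs: "\<And>k. k < n \<Longrightarrow> v k \<in> space (F k)" and n: "n > 0"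
  shows "SW_opt n v \<le> p + (\<Sum>i<n. Ui i v)"
  unfolding SW_opt_def
proof (rule cSup_least)
  show "{\<Sum>i<n. v i (x i) |x. (\<forall>i<n. 0 \<le> x i) \<and> (\<Sum>i<n. x i) = 1} \<noteq> {}"
  proof -
    define x0 where "x0 = (\<lambda>k::nat. if k = 0 then 1 else 0::real)"
    have "(\<Sum>i<n. x0 i) = 1" using n unfolding x0_def by (simp add: sum.delta)
    moreover have "\<forall>i<n. 0 \<le> x0 i" unfolding x0_def by simp
    ultimately have "(\<Sum>i<n. v i (x0 i)) \<in> {\<Sum>i<n. v i (x i) |x. (\<forall>i<n. 0 \<le> x i) \<and> (\<Sum>i<n. x i) = 1}"
      by (intro CollectI exI[of _ x0] conjI refl)
    thus ?thesis by (rule ex_in_conv[THEN iffD1, OF exI]) 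
  qed
next
  fix a assume "a \<in> {\<Sum>i<n. v i (x i) |x. (\<forall>i<n. 0 \<le> x i) \<and> (\<Sum>i<n. x i) = 1}"
  then obtain x where x: "a = (\<Sum>i<n. v i (x i))" "\<forall>i<n. 0 \<le> x i" "(\<Sum>i<n. x i) = 1" by blast
  have "v i (x i) \<le> Ui i v + p * x i" if i: "i < n" for i
  proof -
    interpret dem "v i" "ystar i (v i)" by (rule dem_i[OF i vs[OF i]])
    have "x i \<le> 1" using member_le_sum[of i "{..<n}" x] x i by auto
    thus ?thesis using U_ge[OF p_pos, of "x i"] x i unfolding Ui_def by auto
  qed
  hence "a \<le> (\<Sum>i<n. Ui i v + p * x i)" unfolding x(1) by (intro sum_mono) auto
  also have "\<dots> = (\<Sum>i<n. Ui i v) + p" using x(3) by (simp add: sum.distrib sum_distrib_left[symmetric])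
  finally show "a \<le> p + (\<Sum>i<n. Ui i v)" by simp
qed

lemma opt_lower:
  assumes vs: "\<And>k. k < n \<Longrightarrow> v k \<in> space (F k)" and i: "i < n"
  shows "Ui i v \<le> SW_opt n v"
proof -
  interpret dem "v i" "ystar i (v i)" by (rule dem_i[OF i vs[OF i]])
  define x where "x = (\<lambda>k. if k = i then 1 else 0::real)"
  have xs: "(\<Sum>k<n. x k) = 1" unfolding x_def using i by (simp add: sum.delta)
  define S where "S = {\<Sum>i<n. v i (x i) |x. (\<forall>i<n. 0 \<le> x i) \<and> (\<Sum>i<n. x i) = (1::real)}"
  have xnn: "\<forall>k<n. 0 \<le> x k" unfolding x_def by simp
  have mem: "(\<Sum>k<n. v k (x k)) \<in> S" unfolding S_def using xs xnn
    by (intro CollectI exI[of _ x] conjI refl)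
  have bdd: "bdd_above S"
    using opt_upper[OF vs] i unfolding SW_opt_def S_def[symmetric]
  proof -
    have "\<forall>a\<in>S. a \<le> (\<Sum>k<n. v k 1)"
    proof
      fix a assume "a \<in> S"
      then obtain z where z: "a = (\<Sum>k<n. v k (z k))" "\<forall>k<n. 0 \<le> z k" "(\<Sum>k<n. z k) = 1"
        unfolding S_def by blast
      have "v k (z k) \<le> v k 1" if k: "k < n" for k
        using val_mono[OF val[OF k vs[OF k]], of "z k" 1] member_le_sum[of k "{..<n}" z] z k by auto
      thus "a \<le> (\<Sum>k<n. v k 1)" unfolding z(1) by (intro sum_mono) auto
    qed
    thus ?thesis unfolding bdd_above_def by blast
  qed
  have "(\<Sum>k<n. v k (x k)) = v i 1 + (\<Sum>k\<in>{..<n}-{i}. v k 0)"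
    using sw_split[OF i, of v "v i" x] i by (simp add: x_def)
  moreover have "(\<Sum>k\<in>{..<n}-{i}. v k 0) \<ge> 0"
    using val_nonneg[OF val] vs by (intro sum_nonneg) auto
  moreover have "Ui i v \<le> v i 1"
  proof -
    have "Ui i v \<le> v i (ystar i (v i) p)" unfolding Ui_def Uv_def using y01[OF p_pos] p_pos by auto
    also have "\<dots> \<le> v i 1" using val_mono[OF dem.v[OF dem_axioms], of "ystar i (v i) p" 1] y01[OF p_pos] by auto
    finally show ?thesis .
  qed
  moreover have "(\<Sum>k<n. v k (x k)) \<le> SW_opt n v"
    unfolding SW_opt_def S_def[symmetric] by (rule cSup_upper[OF mem bdd])
  ultimately show ?thesis by linarith
qed

end

context setting begin

abbreviation "M \<equiv> PiM {..<n} F"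

lemma spaceM: "v \<in> space M \<Longrightarrow> k < n \<Longrightarrow> v k \<in> space (F k)"
  by (auto simp: space_PiM)

lemma probM: "prob_space M"
  by (rule prob_space_PiM) (use prob in auto)

lemma ys_measM: assumes k: "k < n" shows "(\<lambda>v. ystar k (v k) p) \<in> borel_measurable M"
  by (rule measurable_compose[OF measurable_component_singleton[of k "{..<n}" F] ystar_meas[OF k p_pos]]) (use k in auto)

lemma Ui_measM: assumes i: "i < n" shows "(\<lambda>v. Ui i v) \<in> borel_measurable M"
  unfolding Ui_def
  by (rule measurable_compose[OF measurable_component_singleton[of i "{..<n}" F] U_meas[OF i]]) (use i in auto)

lemma T_measM: "(\<lambda>v. T i v) \<in> borel_measurable M"
  unfolding T_def by (intro borel_measurable_min borel_measurable_const borel_measurable_sum ys_measM) auto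

lemma SWopt_meas: "SW_opt n \<in> borel_measurable M" using int_opt by auto

lemma T01: "0 \<le> T i v" "T i v \<le> 1" if "v \<in> space M"
proof -
  have "(\<Sum>j\<in>{..<n}-{i}. ystar j (v j) p) \<ge> 0"
    using ys01 spaceM[OF that] by (intro sum_nonneg) auto
  thus "0 \<le> T i v" "T i v \<le> 1" unfolding T_def by auto
qed

lemma Ui_int: assumes i: "i < n" shows "integrable M (\<lambda>v. Ui i v)"
proof (rule Bochner_Integration.integrable_bound[OF int_opt Ui_measM[OF i]])
  show "AE v in M. norm (Ui i v) \<le> norm (SW_opt n v)"
  proof (rule AE_I2)
    fix v assume v: "v \<in> space M"
    have u: "0 \<le> Ui i v" "Ui i v \<le> SW_opt n v"
      using Ui_nonneg[of i v, OF i spaceM[OF v i]] opt_lower[OF spaceM[OF v] i] by auto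
    thus "norm (Ui i v) \<le> norm (SW_opt n v)" by auto
  qed
qed

lemma TUi_int: "i < n \<Longrightarrow> integrable M (\<lambda>v. T i v * Ui i v)"
proof (rule Bochner_Integration.integrable_bound[OF int_opt])
  assume i: "i < n"
  show "(\<lambda>v. T i v * Ui i v) \<in> borel_measurable M" using T_measM Ui_measM[OF i] by measurable
  show "AE v in M. norm (T i v * Ui i v) \<le> norm (SW_opt n v)"
  proof (rule AE_I2)
    fix v assume v: "v \<in> space M"
    have u: "0 \<le> Ui i v" "Ui i v \<le> SW_opt n v" using Ui_nonneg[of i v, OF i spaceM[OF v i]] opt_lower[OF spaceM[OF v] i] by auto
    have "T i v * Ui i v \<le> 1 * Ui i v" using T01[OF v] u by (intro mult_right_mono) auto
    moreover have "T i v * Ui i v \<ge> 0" using T01[OF v] u by auto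
    ultimately show "norm (T i v * Ui i v) \<le> norm (SW_opt n v)" using u by auto
  qed
qed

lemma T_int: "integrable M (\<lambda>v. T i v)"
proof -
  interpret prob_space M by (rule probM)
  show ?thesis
  proof (rule integrable_const_bound[where B=1])
    show "AE v in M. norm (T i v) \<le> 1" by (rule AE_I2) (use T01 in auto)
  qed (rule T_measM)
qed

end

context setting begin

lemma indep:
  assumes i: "i < n"
  shows "(\<integral>v. T i v * Ui i v \<partial>M) = (\<integral>v. T i v \<partial>M) * (\<integral>v. Ui i v \<partial>M)"
proof -
  define F' where "F' k = (if k < n then F k else count_space {undefined})" for k
  interpret M': prob_space "F' k" for k
    unfolding F'_def using prob by (cases "k < n") (auto intro!: prob_spaceI)
  define J where "J = {..<n} - {i}"
  interpret P: product_prob_space F' J by unfold_locales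
  have finJ: "finite J" unfolding J_def by auto
  have iJ: "i \<notin> J" unfolding J_def by auto
  have insJ: "insert i J = {..<n}" unfolding J_def using i by auto
  have MJ: "PiM {..<n} F = PiM (insert i J) F'"
    unfolding insJ by (intro PiM_cong) (auto simp: F'_def)
  have Fi: "F' i = F i" unfolding F'_def using i by simp
  have pj: "measure (PiM J F') (space (PiM J F')) = 1"
    using prob_space.prob_space[OF prob_space_PiM[of J F']] M'.prob_space_axioms by blast
  define T' where "T' x = min 1 (\<Sum>j\<in>J. ystar j (x j) p)" for x :: "nat \<Rightarrow> real \<Rightarrow> real"
  define u where "u f = Uv f (ystar i f) p" for f
  have Tupd: "T i (x(i:=y)) = T' x" for x y
    unfolding T_def T'_def J_def by (intro arg_cong2[where f=min] refl sum.cong) auto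
  have Uupd: "Ui i (x(i:=y)) = u y" for x y unfolding Ui_def u_def by simp
  define U0 where "U0 = (\<integral>y. u y \<partial>F i)"
  have e1: "(\<integral>v. T i v * Ui i v \<partial>M) = (\<integral>x. T' x * U0 \<partial>PiM J F')"
    unfolding MJ
    using P.product_integral_insert[OF finJ iJ TUi_int[OF i, unfolded MJ]]
    by (simp add: Tupd Uupd Fi U0_def)
  have e2: "(\<integral>v. T i v \<partial>M) = (\<integral>x. T' x \<partial>PiM J F')"
    unfolding MJ
    using P.product_integral_insert[OF finJ iJ T_int[of i, unfolded MJ]]
    by (simp add: Tupd M'.prob_space)
  have e3: "(\<integral>v. Ui i v \<partial>M) = U0"
    unfolding MJ
    using P.product_integral_insert[OF finJ iJ Ui_int[OF i, unfolded MJ]]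
    by (simp add: Uupd Fi U0_def pj)
  show ?thesis unfolding e1 e2 e3 by simp
qed

end

lemma rho2_pos: "rho2 > 0" unfolding rho2_def by (simp add: add_pos_nonneg)

lemma rho2_half: "rho2 \<le> 1/2"
proof -
  have "exp (1/2::real) * exp (1/2) = exp 1" by (simp add: exp_add[symmetric])
  hence sq: "exp (1/2::real) * exp (1/2) \<le> 3" using exp_le by simp
  have "exp (1/2::real) \<le> 2"
  proof (rule ccontr)
    assume "\<not> exp (1/2::real) \<le> 2"
    hence "exp (1/2::real) > 2" by simp
    hence "exp (1/2::real) * exp (1/2) > 2 * 2" by (intro mult_strict_mono) auto
    thus False using sq by simp
  qed
  hence "ln (exp (1/2::real)) \<le> ln 2" by (subst ln_le_cancel_iff) auto
  hence "1/2 \<le> ln (2::real)" by simp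
  hence "2 \<le> 1 + 2 * ln (2::real)" by simp
  thus ?thesis unfolding rho2_def by (simp add: field_simps)
qed

theorem mainTheorem4:
  fixes n :: nat
    and F :: "nat \<Rightarrow> (real \<Rightarrow> real) measure"
    and ystar :: "nat \<Rightarrow> (real \<Rightarrow> real) \<Rightarrow> real \<Rightarrow> real"
    and p :: real
  assumes prob: "\<And>i. i < n \<Longrightarrow> prob_space (F i)"
    and val: "\<And>i f. i < n \<Longrightarrow> f \<in> space (F i) \<Longrightarrow> valuation f"
    and ystar_opt: "\<And>i f q. i < n \<Longrightarrow> f \<in> space (F i) \<Longrightarrow> q > 0 \<Longrightarrow> is_opt_demand f q (ystar i f q)"
    and ystar_meas: "\<And>i q. i < n \<Longrightarrow> q > 0 \<Longrightarrow> (\<lambda>f. ystar i f q) \<in> borel_measurable (F i)"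
    and int_opt: "integrable (PiM {..<n} F) (SW_opt n)"
    and int_SW: "integrable (PiM {..<n} F) (\<lambda>v. avg_perm n (SW n ystar v p))"
    and int_y: "integrable (PiM {..<n} F) (\<lambda>v. avg_perm n (\<lambda>\<pi>. \<Sum>i<n. y_alloc n ystar v p \<pi> i))"
    and p_pos: "p > 0"
    and p_sell: "(\<integral>v. avg_perm n (\<lambda>\<pi>. \<Sum>i<n. y_alloc n ystar v p \<pi> i) \<partial>PiM {..<n} F) = rho2"
  shows "(\<integral>v. avg_perm n (SW n ystar v p) \<partial>PiM {..<n} F)
           \<ge> rho2 * (\<integral>v. SW_opt n v \<partial>PiM {..<n} F)"
proof -
  interpret setting n F ystar p
    unfolding setting_def using prob val ystar_opt ystar_meas int_opt p_pos by blast
  have n0: "n > 0"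
  proof (rule ccontr)
    assume "\<not> n > 0"
    hence "n = 0" by simp
    hence "(\<integral>v. avg_perm n (\<lambda>\<pi>. \<Sum>i<n. y_alloc n ystar v p \<pi> i) \<partial>PiM {..<n} F) = 0"
      using avg_const[of n 0] by simp
    thus False using p_sell rho2_pos by simp
  qed
  have intS: "integrable M avgS" using int_y unfolding avgS_def .
  have Ssell: "(\<integral>v. avgS v \<partial>M) = rho2" using p_sell unfolding avgS_def .
  define G where "G v = p * (avgS v - rho2) + (\<Sum>i<n. (1 - rho2) * Ui i v - T i v * Ui i v)" for v
  have HG: "G v \<le> avg_perm n (SW n ystar v p) - rho2 * SW_opt n v" if v: "v \<in> space M" for v
  proof -
    have vs: "\<And>k. k < n \<Longrightarrow> v k \<in> space (F k)" using spaceM[OF v] .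
    have a: "avg_perm n (SW n ystar v p) \<ge> p * avgS v + (\<Sum>i<n. (1 - T i v) * Ui i v)"
      by (rule sw_lower[OF vs])
    have b: "rho2 * SW_opt n v \<le> rho2 * (p + (\<Sum>i<n. Ui i v))"
      using opt_upper[OF vs n0] rho2_pos by (intro mult_left_mono) auto
    have "G v = p * avgS v + (\<Sum>i<n. (1 - T i v) * Ui i v) - rho2 * (p + (\<Sum>i<n. Ui i v))"
      unfolding G_def by (simp add: sum_subtractf sum.distrib sum_distrib_left algebra_simps)
    thus ?thesis using a b by linarith
  qed
  interpret PM: prob_space M by (rule probM)
  have i1: "integrable M (\<lambda>v. p * (avgS v - rho2))"
  proof -
    have "integrable M (\<lambda>v. avgS v - rho2)" by (rule Bochner_Integration.integrable_diff[OF intS]) simp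
    thus ?thesis by (rule Bochner_Integration.integrable_mult_right)
  qed
  have i2: "integrable M (\<lambda>v. \<Sum>i<n. (1 - rho2) * Ui i v - T i v * Ui i v)"
    by (intro Bochner_Integration.integrable_sum Bochner_Integration.integrable_diff Bochner_Integration.integrable_mult_right) (auto intro: Ui_int TUi_int)
  have intG: "integrable M G"
    unfolding G_def using i1 i2 by (rule Bochner_Integration.integrable_add)
  have "(\<integral>v. G v \<partial>M) \<le> (\<integral>v. avg_perm n (SW n ystar v p) - rho2 * SW_opt n v \<partial>M)"
    by (rule Bochner_Integration.integral_mono[OF intG]) (use int_SW int_opt HG in auto)
  also have "\<dots> = (\<integral>v. avg_perm n (SW n ystar v p) \<partial>M) - rho2 * (\<integral>v. SW_opt n v \<partial>M)"
    using int_SW int_opt by simp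
  finally have main: "(\<integral>v. G v \<partial>M) \<le> (\<integral>v. avg_perm n (SW n ystar v p) \<partial>M) - rho2 * (\<integral>v. SW_opt n v \<partial>M)" .
  have eG: "(\<integral>v. G v \<partial>M) = (\<Sum>i<n. (1 - rho2) * (\<integral>v. Ui i v \<partial>M) - (\<integral>v. T i v * Ui i v \<partial>M))"
  proof -
    have "(\<integral>v. G v \<partial>M) = p * ((\<integral>v. avgS v \<partial>M) - rho2) + (\<Sum>i<n. (1 - rho2) * (\<integral>v. Ui i v \<partial>M) - (\<integral>v. T i v * Ui i v \<partial>M))"
    proof -
      have "(\<integral>v. G v \<partial>M) = (\<integral>v. p * (avgS v - rho2) \<partial>M) + (\<integral>v. (\<Sum>i<n. (1 - rho2) * Ui i v - T i v * Ui i v) \<partial>M)"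
        unfolding G_def by (rule Bochner_Integration.integral_add[OF i1 i2])
      also have "(\<integral>v. p * (avgS v - rho2) \<partial>M) = p * ((\<integral>v. avgS v \<partial>M) - rho2)"
        using intS PM.prob_space by simp
      also have "(\<integral>v. (\<Sum>i<n. (1 - rho2) * Ui i v - T i v * Ui i v) \<partial>M)
                 = (\<Sum>i<n. (\<integral>v. (1 - rho2) * Ui i v - T i v * Ui i v \<partial>M))"
        by (rule Bochner_Integration.integral_sum) (auto intro!: Bochner_Integration.integrable_diff Bochner_Integration.integrable_mult_right Ui_int TUi_int)
      also have "\<dots> = (\<Sum>i<n. (1 - rho2) * (\<integral>v. Ui i v \<partial>M) - (\<integral>v. T i v * Ui i v \<partial>M))"
        by (rule sum.cong) (auto simp: Ui_int TUi_int)
      finally show ?thesis .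
    qed
    thus ?thesis using Ssell by simp
  qed
  have "(\<integral>v. G v \<partial>M) \<ge> 0"
    unfolding eG
  proof (rule sum_nonneg)
    fix i assume "i \<in> {..<n}"
    hence i: "i < n" by simp
    have Tle: "(\<integral>v. T i v \<partial>M) \<le> rho2"
    proof -
      have "(\<integral>v. T i v \<partial>M) \<le> (\<integral>v. avgS v \<partial>M)"
      proof (rule Bochner_Integration.integral_mono[OF T_int intS])
        fix v assume v: "v \<in> space M"
        have vs: "\<And>k. k < n \<Longrightarrow> v k \<in> space (F k)" using spaceM[OF v] .
        have y0: "\<And>k. k < n \<Longrightarrow> ystar k (v k) p \<ge> 0" using ys01 vs by blast
        have "(\<Sum>j\<in>{..<n}-{i}. ystar j (v j) p) \<le> (\<Sum>k<n. ystar k (v k) p)"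
          by (rule sum_mono2) (use y0 in auto)
        hence "T i v \<le> min 1 (\<Sum>k<n. ystar k (v k) p)" unfolding T_def by auto
        also have "\<dots> = avgS v"
        proof -
          have "avgS v = avg_perm n (\<lambda>\<pi>. min 1 (\<Sum>k<n. ystar k (v k) p))"
            unfolding avgS_def avg_perm_def
            by (intro arg_cong2[where f="(/)"] refl sum.cong) (use alloc_sum y0 in \<open>auto simp: perms_def\<close>)
          thus ?thesis using avg_const by simp
        qed
        finally show "T i v \<le> avgS v" .
      qed
      thus ?thesis using Ssell by simp
    qed
    have U0: "(\<integral>v. Ui i v \<partial>M) \<ge> 0"
      by (rule integral_nonneg_AE) (use Ui_nonneg spaceM i in \<open>auto intro!: AE_I2\<close>)
    have "(1 - 2 * rho2) * (\<integral>v. Ui i v \<partial>M) \<ge> 0" using rho2_half U0 by auto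
    moreover have "(1 - rho2 - (\<integral>v. T i v \<partial>M)) * (\<integral>v. Ui i v \<partial>M) \<ge> (1 - 2 * rho2) * (\<integral>v. Ui i v \<partial>M)"
      using Tle U0 by (intro mult_right_mono) auto
    ultimately show "0 \<le> (1 - rho2) * (\<integral>v. Ui i v \<partial>M) - (\<integral>v. T i v * Ui i v \<partial>M)"
      unfolding indep[OF i] by (simp add: algebra_simps)
  qed
  with main show ?thesis by simp
qed

end
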